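(* For every integer $N\ge 0$, let $T_{2\times 3}(9,N)$ be the number of tilings of a $9\times n$ rectangle, $n=2N/3$, by $N$ tiles of size $2\times 3$ (and $0$ if $2N/3\notin\mathbb{Z}$). Then, as formal power series, \[ \sum_{N\ge 0} T_{2\times 3}(9,N)\,z^N=\frac{1-z^3}{1-2z^3+z^6-4z^9+2z^{12}}. \]
   Context: A tiling of an $m\times n$ rectangle (width $m$, length $n$, made of $mn$ unit squares) by $a\times b$ tiles is a partition of the rectangle into non-overlapping axis-parallel $a\times b$ rectangles with integer corner coordinates, each placed in either of its two orientations. Tilings related by reflections or rotations of the rectangle are counted as distinct. The empty tiling counts once for $N=0$. *)

theory Defs
  imports "HOL-Computational_Algebra.Formal_Power_Series"
begin

text \<open>The m x n rectangle (width m along the first coordinate, length n along the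
second), as its set of unit cells, each cell identified by its lower-left corner.\<close>
definition rect :: "nat \<Rightarrow> nat \<Rightarrow> (nat \<times> nat) set" where
  "rect m n = {0..<m} \<times> {0..<n}"

definition is_tile :: "nat \<Rightarrow> nat \<Rightarrow> (nat \<times> nat) set \<Rightarrow> bool" where
  "is_tile a b S \<longleftrightarrow>
     (\<exists>x y. S = {x..<x+a} \<times> {y..<y+b} \<or> S = {x..<x+b} \<times> {y..<y+a})"

definition tilings :: "nat \<Rightarrow> nat \<Rightarrow> nat \<Rightarrow> nat \<Rightarrow> (nat \<times> nat) set set set" where
  "tilings a b m n = {P. (\<forall>S\<in>P. is_tile a b S \<and> S \<subseteq> rect m n)
                         \<and> pairwise disjnt P \<and> \<Union>P = rect m n}"

definition T23_9 :: "nat \<Rightarrow> nat" where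
  "T23_9 N = (if 3 dvd 2 * N
              then card {P \<in> tilings 2 3 9 (2 * N div 3). card P = N}
              else 0)"

end

theory Submission
  imports Defs
begin


fun idx :: "nat list \<Rightarrow> nat \<Rightarrow> nat" where
  "idx [] v = 0"
| "idx (x # xs) v = (if x = v then 0 else Suc (idx xs v))"

definition place :: "nat list \<Rightarrow> nat \<Rightarrow> nat \<Rightarrow> nat \<Rightarrow> nat list" where
  "place h x0 a v = map (\<lambda>i. if x0 \<le> i \<and> i < x0 + a then v else h ! i) [0..<length h]"

definition fits :: "nat list \<Rightarrow> nat \<Rightarrow> nat \<Rightarrow> nat \<Rightarrow> bool" where
  "fits h x0 a m \<longleftrightarrow> x0 + a \<le> length h \<and> list_all (\<lambda>i. h ! i = m) [x0..<x0+a]"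

lemma idx_props:
  assumes "v \<in> set xs"
  shows "idx xs v < length xs \<and> xs ! idx xs v = v \<and> (\<forall>i<idx xs v. xs ! i \<noteq> v)"
  using assms
proof (induction xs)
  case Nil then show ?case by simp
next
  case (Cons x xs) then show ?case by (auto simp: nth_Cons less_Suc_eq_0_disj)
qed

lemma place_length[simp]: "length (place h x0 a v) = length h"
  by (simp add: place_def)

lemma place_nth[simp]: "i < length h \<Longrightarrow> place h x0 a v ! i = (if x0 \<le> i \<and> i < x0 + a then v else h ! i)"
  by (simp add: place_def)

lemma fits_iff: "fits h x0 a m \<longleftrightarrow> x0 + a \<le> length h \<and> (\<forall>i. x0 \<le> i \<and> i < x0 + a \<longrightarrow> h ! i = m)"
  by (auto simp: fits_def list_all_iff)

lemma meas_dec: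
  assumes "fits h x0 a m" "0 < a" "m < v" "v \<le> L"
  shows "(\<Sum>i<length (place h x0 a v). L - place h x0 a v ! i) < (\<Sum>i<length h. L - h ! i)"
proof -
  have f: "x0 + a \<le> length h" "\<And>i. x0 \<le> i \<Longrightarrow> i < x0 + a \<Longrightarrow> h ! i = m"
    using assms(1) by (auto simp: fits_iff)
  have "(\<Sum>i<length h. L - place h x0 a v ! i) < (\<Sum>i<length h. L - h ! i)"
  proof (rule sum_strict_mono_ex1)
    show "\<forall>i\<in>{..<length h}. L - place h x0 a v ! i \<le> L - h ! i"
      using f assms by auto
    show "\<exists>i\<in>{..<length h}. L - place h x0 a v ! i < L - h ! i"
      using f assms by (intro bexI[of _ x0]) auto
  qed simp
  then show ?thesis by simp
qed

function cnt :: "nat list \<Rightarrow> nat \<Rightarrow> nat" where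
  "cnt h L = (if list_all (\<lambda>x. L \<le> x) h then 1 else
     (if fits h (idx h (min_list h)) 2 (min_list h) \<and> min_list h + 3 \<le> L
      then cnt (place h (idx h (min_list h)) 2 (min_list h + 3)) L else 0) +
     (if fits h (idx h (min_list h)) 3 (min_list h) \<and> min_list h + 2 \<le> L
      then cnt (place h (idx h (min_list h)) 3 (min_list h + 2)) L else 0))"
  by pat_completeness auto
termination
proof (relation "measure (\<lambda>(h, L). \<Sum>i<length h. L - h ! i)", goal_cases)
  case 1 then show ?case by simp
next
  case (2 h L) then show ?case
    using meas_dec[of h "idx h (min_list h)" 2 "min_list h" "min_list h + 3" L] by simp
next
  case (3 h L) then show ?case
    using meas_dec[of h "idx h (min_list h)" 3 "min_list h" "min_list h + 2" L] by simp
qed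

declare cnt.simps[simp del]


lemma min_list_map_add: "h \<noteq> [] \<Longrightarrow> min_list (map (\<lambda>x. x + c) h) = min_list h + (c::nat)"
proof (induction h)
  case Nil then show ?case by simp
next
  case (Cons x xs) then show ?case by (cases xs) auto
qed

lemma idx_map_add: "idx (map (\<lambda>x. x + c) h) (v + (c::nat)) = idx h v"
  by (induction h) auto

lemma fits_map_add: "fits (map (\<lambda>x. x + c) h) x0 a (m + (c::nat)) = fits h x0 a m"
  by (auto simp: fits_iff)

lemma place_map_add: "place (map (\<lambda>x. x + c) h) x0 a (v + (c::nat)) = map (\<lambda>x. x + c) (place h x0 a v)"
  by (simp add: place_def)

lemma cnt_shift: "cnt (map (\<lambda>x. x + c) h) (L + c) = cnt h L"
proof (induction h L rule: cnt.induct)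
  case (1 h L)
  show ?case
  proof (cases "list_all (\<lambda>x. L \<le> x) h")
    case True
    then have "list_all (\<lambda>x. L + c \<le> x) (map (\<lambda>x. x + c) h)" by (simp add: list_all_iff)
    then show ?thesis using True by (simp add: cnt.simps[of _ "L + c"] cnt.simps[of _ L])
  next
    case False
    then have ne: "h \<noteq> []" by auto
    have F: "\<not> list_all (\<lambda>x. L + c \<le> x) (map (\<lambda>x. x + c) h)" using False by (simp add: list_all_iff)
    have M: "min_list (map (\<lambda>x. x + c) h) = min_list h + c" using ne by (rule min_list_map_add)
    let ?m = "min_list h" let ?x = "idx h (min_list h)"
    have I: "idx (map (\<lambda>x. x + c) h) (?m + c) = ?x" by (rule idx_map_add)
    have Pl: "place (map (\<lambda>x. x + c) h) ?x a (?m + c + b) = map (\<lambda>x. x + c) (place h ?x a (?m + b))" for a b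
      using place_map_add[of c h ?x a "?m + b"] by (simp add: add.commute add.left_commute)
    have Fi: "fits (map (\<lambda>x. x + c) h) ?x a (?m + c) = fits h ?x a ?m" for a
      by (rule fits_map_add)
    have e: "?m + c + b \<le> L + c \<longleftrightarrow> ?m + b \<le> L" for b by simp
    show ?thesis
      apply (subst cnt.simps[of _ "L + c"])
      apply (subst cnt.simps[of _ L])
      unfolding M I Fi Pl e
      using False F 1 by simp
  qed
qed

lemma min_list_le: "i < length (h::nat list) \<Longrightarrow> min_list h \<le> h ! i"
  using min_list_Min[of h] by (metis Min_le finite_set length_greater_0_conv less_zeroE list.size(3) nth_mem)

lemma min_list_le': "i < length (h::nat list) \<Longrightarrow> (\<forall>j<length h. m \<le> h ! j) \<Longrightarrow> m \<le> min_list h"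
  using min_list_Min[of h] by (metis Min_in finite_set gr_implies_not0 in_set_conv_nth list.size(3) set_empty)

definition nrm :: "nat list \<Rightarrow> nat list \<times> nat" where
  "nrm h = (map (\<lambda>x. x - min_list h) h, min_list h)"

lemma nrm_ok:
  assumes "h \<noteq> []" "min_list h \<le> L"
  shows "cnt h L = cnt (fst (nrm h)) (nat (int L - int (snd (nrm h))))"
proof -
  let ?m = "min_list h"
  have "h = map (\<lambda>x. x + ?m) (map (\<lambda>x. x - ?m) h)"
    by (rule nth_equalityI) (auto simp: min_list_le)
  moreover have "L = nat (int L - int ?m) + ?m" using assms by simp
  ultimately have "cnt h L = cnt (map (\<lambda>x. x + ?m) (map (\<lambda>x. x - ?m) h)) (nat (int L - int ?m) + ?m)"
    by simp
  also have "\<dots> = cnt (map (\<lambda>x. x - ?m) h) (nat (int L - int ?m))" by (rule cnt_shift)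
  finally show ?thesis by (simp add: nrm_def)
qed

definition tr :: "nat list \<Rightarrow> (nat list \<times> nat) list" where
  "tr h = (if fits h (idx h 0) 2 0 then [nrm (place h (idx h 0) 2 3)] else []) @
          (if fits h (idx h 0) 3 0 then [nrm (place h (idx h 0) 3 2)] else [])"

lemma step:
  assumes "0 \<in> set h" "3 \<le> L"
  shows "int (cnt h L) = (\<Sum>(h', m) \<leftarrow> tr h. int (cnt h' (nat (int L - int m))))"
proof -
  have ne: "h \<noteq> []" using assms by auto
  have m0: "min_list h = 0" using min_list_Min[OF ne] assms(1)
    by (metis Min_le finite_set le_zero_eq)
  have nb: "\<not> list_all (\<lambda>x. L \<le> x) h" using assms by (auto simp: list_all_iff intro!: bexI[of _ 0])
  let ?x = "idx h 0"
  have xl: "?x < length h" using idx_props[OF assms(1)] by simp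
  have P: "cnt (place h ?x a v) L = cnt (fst (nrm (place h ?x a v))) (nat (int L - int (snd (nrm (place h ?x a v)))))"
    if "v \<le> 3" "0 < a" for a v
  proof (rule nrm_ok)
    show "place h ?x a v \<noteq> []" using ne by (simp add: place_def)
    have "min_list (place h ?x a v) \<le> place h ?x a v ! ?x" using xl by (intro min_list_le) simp
    also have "\<dots> = v" using xl that by simp
    finally show "min_list (place h ?x a v) \<le> L" using that assms by simp
  qed
  have "cnt h L = (if fits h ?x 2 0 then cnt (place h ?x 2 3) L else 0) +
                  (if fits h ?x 3 0 then cnt (place h ?x 3 2) L else 0)"
    apply (subst cnt.simps) using nb m0 assms by (simp add: eval_nat_numeral)
  then show ?thesis using P[of 3 2] P[of 2 3] by (simp add: tr_def split_def)
qed

type_synonym comb = "((nat list \<times> int) \<times> int) list"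

definition ev :: "comb \<Rightarrow> nat \<Rightarrow> int" where
  "ev C L = (\<Sum>((h, j), c) \<leftarrow> C. c * int (cnt h (nat (int L + j))))"

fun add_term :: "nat list \<times> int \<Rightarrow> int \<Rightarrow> comb \<Rightarrow> comb" where
  "add_term k c [] = (if c = 0 then [] else [(k, c)])"
| "add_term k c ((k', c') # C) =
     (if k = k' then (if c + c' = 0 then C else (k, c + c') # C) else (k', c') # add_term k c C)"

lemma ev_add_term: "ev (add_term k c C) L = ev C L + c * int (cnt (fst k) (nat (int L + snd k)))"
proof (induction C)
  case Nil then show ?case by (auto simp: ev_def split_def)
next
  case (Cons a C)
  obtain k' c' where a: "a = (k', c')" by (cases a)
  show ?case
  proof (cases "k = k'")
    case True
    then show ?thesis using a
      by (auto simp: ev_def split_def algebra_simps)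
         (metis add.commute add_eq_0_iff distrib_left mult.commute mult_zero_left)
  next
    case False
    then show ?thesis using a Cons by (auto simp: ev_def split_def algebra_simps)
  qed
qed

definition expand :: "nat list \<times> int \<Rightarrow> int \<Rightarrow> comb \<Rightarrow> comb" where
  "expand k c C = fold (\<lambda>(h', m) D. add_term (h', snd k - int m) c D) (tr (fst k)) C"

lemma ev_fold: "ev (fold (\<lambda>(h', m) D. add_term (h', j - int m) c D) xs C) L =
   ev C L + c * (\<Sum>(h', m) \<leftarrow> xs. int (cnt h' (nat (int L + (j - int m)))))"
  by (induction xs arbitrary: C) (auto simp: ev_add_term split_def algebra_simps)

lemma ev_expand:
  assumes "0 \<in> set h" "0 \<le> j" "3 \<le> L"
  shows "ev (expand (h, j) c C) L = ev C L + c * int (cnt h (nat (int L + j)))"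
proof -
  have "int (cnt h (nat (int L + j))) = (\<Sum>(h', m) \<leftarrow> tr h. int (cnt h' (nat (int (nat (int L + j)) - int m))))"
    using assms by (intro step) auto
  also have "\<dots> = (\<Sum>(h', m) \<leftarrow> tr h. int (cnt h' (nat (int L + (j - int m)))))"
    using assms by (simp add: algebra_simps)
  finally show ?thesis by (simp add: expand_def ev_fold)
qed

definition better :: "(nat list \<times> int) \<times> int \<Rightarrow> (nat list \<times> int) \<times> int \<Rightarrow> bool" where
  "better x y \<longleftrightarrow> snd (fst y) < snd (fst x) \<or> (snd (fst x) = snd (fst y) \<and> sum_list (fst (fst x)) < sum_list (fst (fst y)))"

definition pick :: "comb \<Rightarrow> ((nat list \<times> int) \<times> int) option" where
  "pick C = (case filter (\<lambda>((h, j), c). 0 \<le> j \<and> 0 \<in> set h) C of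
              [] \<Rightarrow> None
            | x # xs \<Rightarrow> Some (fold (\<lambda>y b. if better y b then y else b) xs x))"

lemma fold_sel: "fold (\<lambda>y b. if P y b then y else b) xs x \<in> set (x # xs)"
proof (induction xs arbitrary: x)
  case Nil then show ?case by simp
next
  case (Cons a xs x)
  have "fold (\<lambda>y b. if P y b then y else b) xs (if P a x then a else x) \<in> set ((if P a x then a else x) # xs)"
    by (rule Cons.IH)
  then show ?case by (auto split: if_splits)
qed

lemma pick_some: "pick C = Some x \<Longrightarrow> x \<in> set C \<and> 0 \<le> snd (fst x) \<and> 0 \<in> set (fst (fst x))"
proof -
  assume a: "pick C = Some x"
  obtain y ys where f: "filter (\<lambda>((h, j), c). 0 \<le> j \<and> 0 \<in> set h) C = y # ys"
    using a by (auto simp: pick_def split: list.splits)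
  then have "x \<in> set (y # ys)" using a fold_sel[of better ys y] by (simp add: pick_def)
  then have "x \<in> set (filter (\<lambda>((h, j), c). 0 \<le> j \<and> 0 \<in> set h) C)" using f by simp
  then show ?thesis by (auto simp: split_def)
qed

fun loop :: "nat \<Rightarrow> comb \<Rightarrow> comb" where
  "loop 0 C = C"
| "loop (Suc n) C = (case pick C of None \<Rightarrow> C
     | Some (k, c) \<Rightarrow> loop n (expand k c (remove1 (k, c) C)))"

lemma ev_loop: "3 \<le> L \<Longrightarrow> ev (loop n C) L = ev C L"
proof (induction n arbitrary: C)
  case 0 then show ?case by simp
next
  case (Suc n)
  show ?case
  proof (cases "pick C")
    case None then show ?thesis by simp
  next
    case (Some x)
    obtain h j c where x: "x = ((h, j), c)" by (metis prod.collapse)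
    have p: "x \<in> set C" "0 \<le> j" "0 \<in> set h" using pick_some[OF Some] x by auto
    have "ev (loop (Suc n) C) L = ev (expand (h, j) c (remove1 x C)) L"
      using Some x Suc by simp
    also have "\<dots> = ev (remove1 x C) L + c * int (cnt h (nat (int L + j)))"
      using p Suc by (simp add: ev_expand)
    also have "\<dots> = ev C L"
      using sum_list_map_remove1[OF p(1), of "\<lambda>((h, j), c). c * int (cnt h (nat (int L + j)))"] x
      by (simp add: ev_def)
    finally show ?thesis .
  qed
qed

definition C0 :: comb where
  "C0 = [((replicate 9 0, 8), 1), ((replicate 9 0, 6), -2), ((replicate 9 0, 4), 1),
         ((replicate 9 0, 2), -4), ((replicate 9 0, 0), 2)]"

lemma loopC0: "loop 200 C0 = []" by code_simp

lemma vals: "map (cnt (replicate 9 0)) [0..<11] = [1,0,1,0,1,0,5,0,11,0,19]" by code_simp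

lemma recur:
  assumes "3 \<le> L"
  shows "int (cnt (replicate 9 0) (L + 8)) - 2 * int (cnt (replicate 9 0) (L + 6))
       + int (cnt (replicate 9 0) (L + 4)) - 4 * int (cnt (replicate 9 0) (L + 2))
       + 2 * int (cnt (replicate 9 0) L) = 0"
proof -
  have "ev C0 L = ev (loop 200 C0) L" using ev_loop[OF assms] by simp
  also have "\<dots> = 0" by (simp add: loopC0 ev_def)
  finally have "ev C0 L = 0" .
  moreover have "nat (int L + 8) = L + 8" "nat (int L + 6) = L + 6" "nat (int L + 4) = L + 4"
    "nat (int L + 2) = L + 2" by auto
  ultimately show ?thesis by (simp add: ev_def C0_def)
qed



definition til :: "(nat \<times> nat) set \<Rightarrow> (nat \<times> nat) set set set" where
  "til U = {P. (\<forall>S\<in>P. is_tile 2 3 S \<and> S \<subseteq> U) \<and> pairwise disjnt P \<and> \<Union>P = U}"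

lemma til_finite: "finite U \<Longrightarrow> finite (til U)"
  by (rule finite_subset[of _ "Pow (Pow U)"]) (auto simp: til_def)

lemma is_tile_ne: "is_tile 2 3 S \<Longrightarrow> S \<noteq> {}"
proof -
  assume "is_tile 2 3 S"
  then obtain x y where "S = {x..<x+2} \<times> {y..<y+3} \<or> S = {x..<x+3} \<times> {y..<y+2}"
    by (auto simp: is_tile_def)
  then have "(x, y) \<in> S" by auto
  then show ?thesis by auto
qed

lemma til_empty: "til {} = {{}}"
  by (auto simp: til_def dest: is_tile_ne)

definition tl1 :: "nat \<Rightarrow> nat \<Rightarrow> (nat \<times> nat) set" where "tl1 x y = {x..<x+2} \<times> {y..<y+3}"
definition tl2 :: "nat \<Rightarrow> nat \<Rightarrow> (nat \<times> nat) set" where "tl2 x y = {x..<x+3} \<times> {y..<y+2}"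

lemma tile_anchor:
  assumes "is_tile 2 3 S" "S \<subseteq> U" "(x0, y0) \<in> S"
    and mn: "\<forall>(x, y)\<in>U. y0 < y \<or> (y = y0 \<and> x0 \<le> x)"
  shows "S = tl1 x0 y0 \<or> S = tl2 x0 y0"
proof -
  obtain x y where S: "S = {x..<x+2} \<times> {y..<y+3} \<or> S = {x..<x+3} \<times> {y..<y+2}"
    using assms(1) by (auto simp: is_tile_def)
  have "(x, y) \<in> S" using S by auto
  then have "(x, y) \<in> U" using assms(2) by auto
  then have "y0 < y \<or> (y = y0 \<and> x0 \<le> x)" using mn by auto
  moreover have "x \<le> x0" "y \<le> y0" using assms(3) S by auto
  ultimately have "x = x0" "y = y0" by auto
  then show ?thesis using S by (auto simp: tl1_def tl2_def)
qed

lemma card_with: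
  assumes fin: "finite U" and t: "is_tile 2 3 t"
  shows "card {P \<in> til U. t \<in> P} = (if t \<subseteq> U then card (til (U - t)) else 0)"
proof (cases "t \<subseteq> U")
  case False
  then have E: "{P \<in> til U. t \<in> P} = {}" by (auto simp: til_def)
  show ?thesis unfolding E using False by simp
next
  case True
  have ne: "t \<noteq> {}" using t by (rule is_tile_ne)
  have nin: "t \<notin> Q" if "Q \<in> til (U - t)" for Q
  proof
    assume "t \<in> Q"
    then have "t \<subseteq> U - t" using that by (auto simp: til_def)
    then show False using ne by blast
  qed
  have eq: "{P \<in> til U. t \<in> P} = insert t ` til (U - t)"
  proof
    show "{P \<in> til U. t \<in> P} \<subseteq> insert t ` til (U - t)"
    proof
      fix P assume P: "P \<in> {P \<in> til U. t \<in> P}"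
      then have Pt: "P \<in> til U" "t \<in> P" by auto
      have "P - {t} \<in> til (U - t)"
      proof -
        have d: "disjnt S t" if "S \<in> P" "S \<noteq> t" for S
          using Pt that by (auto simp: til_def pairwise_def)
        have "\<forall>S\<in>P - {t}. is_tile 2 3 S \<and> S \<subseteq> U - t"
          using Pt d by (auto simp: til_def disjnt_def)
        moreover have "pairwise disjnt (P - {t})"
          using Pt by (auto simp: til_def pairwise_def)
        moreover have "\<Union>(P - {t}) = U - t"
        proof
          show "\<Union>(P - {t}) \<subseteq> U - t" using Pt d by (auto simp: til_def disjnt_def)
          show "U - t \<subseteq> \<Union>(P - {t})" using Pt by (auto simp: til_def)
        qed
        ultimately show ?thesis by (simp add: til_def)
      qed
      moreover have "P = insert t (P - {t})" using Pt by auto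
      ultimately show "P \<in> insert t ` til (U - t)" by blast
    qed
  next
    show "insert t ` til (U - t) \<subseteq> {P \<in> til U. t \<in> P}"
    proof
      fix P assume "P \<in> insert t ` til (U - t)"
      then obtain Q where Q: "Q \<in> til (U - t)" "P = insert t Q" by auto
      have "\<forall>S\<in>P. is_tile 2 3 S \<and> S \<subseteq> U" using Q t True by (auto simp: til_def)
      moreover have "pairwise disjnt P"
        unfolding Q(2) using Q(1) nin[OF Q(1)]
        by (auto simp: til_def pairwise_insert disjnt_def)
      moreover have "\<Union>P = U" using Q True by (auto simp: til_def)
      ultimately show "P \<in> {P \<in> til U. t \<in> P}" using Q by (auto simp: til_def)
    qed
  qed
  have "inj_on (insert t) (til (U - t))"
  proof (rule inj_onI)
    fix Q1 Q2 assume "Q1 \<in> til (U - t)" "Q2 \<in> til (U - t)" "insert t Q1 = insert t Q2"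
    then show "Q1 = Q2" using nin by (metis insert_ident)
  qed
  then show ?thesis using eq True by (simp add: card_image)
qed

lemma card_til_split:
  assumes fin: "finite U" and c: "(x0, y0) \<in> U"
    and mn: "\<forall>(x, y)\<in>U. y0 < y \<or> (y = y0 \<and> x0 \<le> x)"
  shows "card (til U) = (if tl1 x0 y0 \<subseteq> U then card (til (U - tl1 x0 y0)) else 0)
                      + (if tl2 x0 y0 \<subseteq> U then card (til (U - tl2 x0 y0)) else 0)"
proof -
  have t1: "is_tile 2 3 (tl1 x0 y0)" by (auto simp: is_tile_def tl1_def)
  have t2: "is_tile 2 3 (tl2 x0 y0)" by (auto simp: is_tile_def tl2_def)
  have U: "til U = {P \<in> til U. tl1 x0 y0 \<in> P} \<union> {P \<in> til U. tl2 x0 y0 \<in> P}"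
  proof (intro equalityI subsetI)
    fix P assume P: "P \<in> til U"
    then obtain S where S: "S \<in> P" "(x0, y0) \<in> S" using c by (auto simp: til_def)
    then have "S = tl1 x0 y0 \<or> S = tl2 x0 y0"
      using P mn by (intro tile_anchor[of S U]) (auto simp: til_def)
    then show "P \<in> {P \<in> til U. tl1 x0 y0 \<in> P} \<union> {P \<in> til U. tl2 x0 y0 \<in> P}" using S P by auto
  qed auto
  have D: "{P \<in> til U. tl1 x0 y0 \<in> P} \<inter> {P \<in> til U. tl2 x0 y0 \<in> P} = {}"
  proof (rule ccontr)
    assume "\<not> ?thesis"
    then obtain P where P: "P \<in> til U" "tl1 x0 y0 \<in> P" "tl2 x0 y0 \<in> P" by auto
    have "tl1 x0 y0 \<noteq> tl2 x0 y0"
    proof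
      assume "tl1 x0 y0 = tl2 x0 y0"
      moreover have "(x0 + 2, y0) \<in> tl2 x0 y0" by (simp add: tl2_def)
      ultimately have "(x0 + 2, y0) \<in> tl1 x0 y0" by simp
      then show False by (simp add: tl1_def)
    qed
    then have "disjnt (tl1 x0 y0) (tl2 x0 y0)" using P by (auto simp: til_def pairwise_def)
    moreover have "(x0, y0) \<in> tl1 x0 y0" "(x0, y0) \<in> tl2 x0 y0" by (auto simp: tl1_def tl2_def)
    ultimately show False by (auto simp: disjnt_def)
  qed
  have "card (til U) = card {P \<in> til U. tl1 x0 y0 \<in> P} + card {P \<in> til U. tl2 x0 y0 \<in> P}"
    using til_finite[OF fin] D by (subst U) (rule card_Un_disjoint, auto)
  then show ?thesis using card_with[OF fin t1] card_with[OF fin t2] by simp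
qed

definition R :: "nat list \<Rightarrow> nat \<Rightarrow> (nat \<times> nat) set" where
  "R h L = {(x, y). x < length h \<and> h ! x \<le> y \<and> y < L}"

lemma R_finite: "finite (R h L)"
  by (rule finite_subset[of _ "{..<length h} \<times> {..<L}"]) (auto simp: R_def)

lemma tile_sub:
  assumes "\<forall>i<length h. m \<le> h ! i" "0 < a" "0 < b"
  shows "{x0..<x0+a} \<times> {m..<m+b} \<subseteq> R h L \<longleftrightarrow> fits h x0 a m \<and> m + b \<le> L"
proof
  assume s: "{x0..<x0+a} \<times> {m..<m+b} \<subseteq> R h L"
  have "(x0 + a - 1, m) \<in> R h L" using s assms by auto
  then have l: "x0 + a \<le> length h" unfolding R_def using assms by auto
  have "h ! i = m" if "x0 \<le> i" "i < x0 + a" for i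
  proof -
    have "(i, m) \<in> R h L" using s that assms by auto
    then show ?thesis using assms(1) l that by (auto simp: R_def intro: antisym)
  qed
  moreover have "(x0, m + b - 1) \<in> R h L" using s assms by auto
  then have "m + b \<le> L" by (auto simp: R_def)
  ultimately show "fits h x0 a m \<and> m + b \<le> L" using l by (auto simp: fits_iff)
next
  assume "fits h x0 a m \<and> m + b \<le> L"
  then show "{x0..<x0+a} \<times> {m..<m+b} \<subseteq> R h L" by (auto simp: fits_iff R_def)
qed

lemma R_diff:
  assumes "fits h x0 a m"
  shows "R h L - {x0..<x0+a} \<times> {m..<m+b} = R (place h x0 a (m + b)) L"
  using assms unfolding fits_iff R_def by (auto split: if_splits)

lemma cnt_correct: "card (til (R h L)) = cnt h L"
proof (induction h L rule: cnt.induct)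
  case (1 h L)
  show ?case
  proof (cases "list_all (\<lambda>x. L \<le> x) h")
    case True
    then have "R h L = {}" by (auto simp: R_def list_all_iff dest!: nth_mem)
    then show ?thesis using True by (simp add: til_empty cnt.simps[of h L])
  next
    case False
    then have ne: "h \<noteq> []" by auto
    let ?m = "min_list h" let ?x = "idx h (min_list h)"
    have mset: "?m \<in> set h" using min_list_Min[OF ne] ne by (simp add: Min_in)
    have ip: "?x < length h" "h ! ?x = ?m" "\<forall>i<?x. h ! i \<noteq> ?m" using idx_props[OF mset] by auto
    have mle: "\<forall>i<length h. ?m \<le> h ! i" by (simp add: min_list_le)
    obtain z where z: "z \<in> set h" "z < L" using False by (auto simp: list_all_iff)
    have mL: "?m < L" using z min_list_Min[OF ne] by (metis Min_le finite_set le_less_trans)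
    have c: "(?x, ?m) \<in> R h L" using ip mL by (simp add: R_def)
    have mn: "\<forall>(x, y)\<in>R h L. ?m < y \<or> (y = ?m \<and> ?x \<le> x)"
    proof -
      have "?m < y \<or> (y = ?m \<and> ?x \<le> x)" if "(x, y) \<in> R h L" for x y
      proof (cases "?m < y")
        case False
        then have "x < length h" "h ! x \<le> y" "y \<le> ?m" using that by (auto simp: R_def)
        then have "h ! x = ?m" "y = ?m" using mle by (auto intro: antisym order_trans)
        then show ?thesis using ip(3) by (meson not_le)
      qed simp
      then show ?thesis by auto
    qed
    have S1: "tl1 ?x ?m \<subseteq> R h L \<longleftrightarrow> fits h ?x 2 ?m \<and> ?m + 3 \<le> L"
      unfolding tl1_def by (rule tile_sub[OF mle]) auto
    have S2: "tl2 ?x ?m \<subseteq> R h L \<longleftrightarrow> fits h ?x 3 ?m \<and> ?m + 2 \<le> L"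
      unfolding tl2_def by (rule tile_sub[OF mle]) auto
    have D1: "fits h ?x 2 ?m \<Longrightarrow> R h L - tl1 ?x ?m = R (place h ?x 2 (?m + 3)) L"
      unfolding tl1_def by (rule R_diff)
    have D2: "fits h ?x 3 ?m \<Longrightarrow> R h L - tl2 ?x ?m = R (place h ?x 3 (?m + 2)) L"
      unfolding tl2_def by (rule R_diff)
    have "card (til (R h L)) = (if tl1 ?x ?m \<subseteq> R h L then card (til (R h L - tl1 ?x ?m)) else 0)
                      + (if tl2 ?x ?m \<subseteq> R h L then card (til (R h L - tl2 ?x ?m)) else 0)"
      by (rule card_til_split[OF R_finite c mn])
    also have "\<dots> = cnt h L"
      apply (subst cnt.simps[of h L])
      unfolding S1 S2 using False D1 D2 1 by simp
    finally show ?thesis .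
  qed
qed

lemma tilings_card:
  assumes "P \<in> tilings 2 3 9 n"
  shows "6 * card P = 9 * n"
proof -
  have P: "\<forall>S\<in>P. is_tile 2 3 S" "pairwise disjnt P" "\<Union>P = rect 9 n"
    using assms by (auto simp: tilings_def)
  have c6: "card S = 6" if "S \<in> P" for S
    using P(1) that by (auto simp: is_tile_def card_cartesian_product)
  have fS: "finite S" if "S \<in> P" for S
    using P(1) that by (auto simp: is_tile_def)
  have "card (\<Union>P) = sum card P" using P(2) fS by (rule card_Union_disjoint)
  also have "\<dots> = sum (\<lambda>_. 6) P" using c6 by (rule sum.cong[OF refl])
  also have "\<dots> = 6 * card P" by simp
  finally show ?thesis using P(3) by (simp add: rect_def card_cartesian_product)
qed

lemma T23_9_eq: "T23_9 N = (if 3 dvd N then cnt (replicate 9 0) (2 * (N div 3)) else 0)"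
proof (cases "3 dvd N")
  case True
  then obtain k where k: "N = 3 * k" by blast
  have n: "2 * N div 3 = 2 * k" using k by simp
  have "{P \<in> tilings 2 3 9 (2 * k). card P = N} = tilings 2 3 9 (2 * k)"
    using tilings_card[of _ "2 * k"] k by auto
  moreover have "tilings 2 3 9 (2 * k) = til (R (replicate 9 0) (2 * k))"
  proof -
    have "rect 9 (2 * k) = R (replicate 9 0) (2 * k)" by (auto simp: rect_def R_def)
    then show ?thesis by (simp add: tilings_def til_def)
  qed
  ultimately show ?thesis using True k by (simp add: T23_9_def cnt_correct)
next
  case False
  then have "\<not> 3 dvd 2 * N" by presburger
  then show ?thesis using False by (simp add: T23_9_def)
qed



lemma v0: "cnt (replicate 9 0) 0 = 1" by code_simp
lemma v2: "cnt (replicate 9 0) 2 = 1" by code_simp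
lemma v4: "cnt (replicate 9 0) 4 = 1" by code_simp
lemma v6: "cnt (replicate 9 0) 6 = 5" by code_simp
lemma v8: "cnt (replicate 9 0) 8 = 11" by code_simp
lemma v10: "cnt (replicate 9 0) 10 = 19" by code_simp

theorem mainTheorem12:
  shows "Abs_fps (\<lambda>N. of_nat (T23_9 N) :: rat) =
         (1 - fps_X ^ 3) / (1 - 2 * fps_X ^ 3 + fps_X ^ 6 - 4 * fps_X ^ 9 + 2 * fps_X ^ 12)"
proof -
  define a where "a N = (of_nat (T23_9 N) :: rat)" for N
  define c where "c L = (of_nat (cnt (replicate 9 0) L) :: rat)" for L
  have a3: "a (3 * j) = c (2 * j)" for j by (simp add: a_def c_def T23_9_eq)
  have an: "\<not> 3 dvd n \<Longrightarrow> a n = 0" for n by (simp add: a_def T23_9_eq)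
  define A where "A = Abs_fps a"
  define D :: "rat fps" where "D = 1 - 2 * fps_X ^ 3 + fps_X ^ 6 - 4 * fps_X ^ 9 + 2 * fps_X ^ 12"
  have DA: "D * A = A - 2 * (fps_X ^ 3 * A) + fps_X ^ 6 * A - 4 * (fps_X ^ 9 * A) + 2 * (fps_X ^ 12 * A)"
    by (simp add: D_def algebra_simps)
  have DA1: "D * A = 1 - fps_X ^ 3"
  proof (rule fps_ext)
    fix n
    have key: "fps_nth (D * A) n = a n - 2 * (if n < 3 then 0 else a (n - 3)) + (if n < 6 then 0 else a (n - 6))
        - 4 * (if n < 9 then 0 else a (n - 9)) + 2 * (if n < 12 then 0 else a (n - 12))"
      unfolding DA by (simp add: fps_X_power_mult_nth A_def numeral_fps_const)
    have rhs: "fps_nth (1 - fps_X ^ 3 :: rat fps) n = (if n = 0 then 1 else 0) - (if n = 3 then 1 else 0)"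
      by (simp add: fps_X_power_nth)
    show "fps_nth (D * A) n = fps_nth (1 - fps_X ^ 3 :: rat fps) n"
    proof (cases "3 dvd n")
      case False
      have "\<not> 3 dvd (n - 3)" "\<not> 3 dvd (n - 6)" "\<not> 3 dvd (n - 9)" "\<not> 3 dvd (n - 12)"
        if "12 \<le> n" using False that by presburger+
      moreover have "\<not> 3 dvd (n - 3)" if "3 \<le> n" using False that by presburger
      moreover have "\<not> 3 dvd (n - 6)" if "6 \<le> n" using False that by presburger
      moreover have "\<not> 3 dvd (n - 9)" if "9 \<le> n" using False that by presburger
      moreover have "n \<noteq> 0" "n \<noteq> 3" using False by presburger+
      ultimately show ?thesis unfolding key rhs using False an by auto
    next
      case True
      then obtain k where k: "n = 3 * k" by blast
      have s: "n - 3 * j = 3 * (k - j)" for j using k by simp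
      have e3: "n - 3 = 3 * (k - 1)" "n - 6 = 3 * (k - 2)" "n - 9 = 3 * (k - 3)" "n - 12 = 3 * (k - 4)"
        using s[of 1] s[of 2] s[of 3] s[of 4] by simp_all
      show ?thesis
      proof (cases "6 \<le> k")
        case True
        define L where "L = 2 * k - 8"
        have L3: "3 \<le> L" using True by (simp add: L_def)
        have R: "int (cnt (replicate 9 0) (L + 8)) - 2 * int (cnt (replicate 9 0) (L + 6))
       + int (cnt (replicate 9 0) (L + 4)) - 4 * int (cnt (replicate 9 0) (L + 2))
       + 2 * int (cnt (replicate 9 0) L) = 0" by (rule recur[OF L3])
        then have R': "c (L + 8) - 2 * c (L + 6) + c (L + 4) - 4 * c (L + 2) + 2 * c L = 0"
          unfolding c_def using arg_cong[OF R, of "of_int :: int \<Rightarrow> rat"] by simp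
        have n12: "12 \<le> n" using True k by simp
        have "a n = c (L + 8)" "a (n - 3) = c (L + 6)" "a (n - 6) = c (L + 4)"
             "a (n - 9) = c (L + 2)" "a (n - 12) = c L"
        proof -
          have i: "2 * k = L + 8" "2 * (k - 1) = L + 6" "2 * (k - 2) = L + 4" "2 * (k - 3) = L + 2" "2 * (k - 4) = L"
            using True by (simp_all add: L_def)
          show "a n = c (L + 8)" unfolding k a3 i(1) by (rule refl)
          show "a (n - 3) = c (L + 6)" unfolding e3(1) a3 i(2) by (rule refl)
          show "a (n - 6) = c (L + 4)" unfolding e3(2) a3 i(3) by (rule refl)
          show "a (n - 9) = c (L + 2)" unfolding e3(3) a3 i(4) by (rule refl)
          show "a (n - 12) = c L" unfolding e3(4) a3 i(5) by (rule refl)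
        qed
        then show ?thesis unfolding key rhs using n12 R' by simp
      next
        case False
        have av: "a 0 = 1" "a 3 = 1" "a 6 = 1" "a 9 = 5" "a 12 = 11" "a 15 = 19"
          using a3[of 0] a3[of 1] a3[of 2] a3[of 3] a3[of 4] a3[of 5] v0 v2 v4 v6 v8 v10
          by (simp_all add: c_def)
        from False have "k = 0 \<or> k = 1 \<or> k = 2 \<or> k = 3 \<or> k = 4 \<or> k = 5" by auto
        then show ?thesis unfolding key rhs using av k by (elim disjE) simp_all
      qed
    qed
  qed
  have D0: "D \<noteq> 0"
  proof
    assume "D = 0"
    then have "fps_nth D 0 = 0" by simp
    then show False by (simp add: D_def)
  qed
  have fin: "(1 - fps_X ^ 3) / D = A"
    unfolding DA1[symmetric] by (rule nonzero_mult_div_cancel_left[OF D0])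
  have aeq: "(\<lambda>N. of_nat (T23_9 N) :: rat) = a" by (rule ext) (simp add: a_def)
  show ?thesis unfolding aeq D_def[symmetric] fin A_def by (rule refl)
qed


end
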